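(* For nonnegative integers $n,m$, \[\sum_{r=0}^n\sum_{s=0}^m\mathcal{K}_{n,m;r,s}(z,w;q)\,\Phi_{r,s}(1,1;z,w;q)=\Phi_{n,m}(1,1;z,w;q)\] and \[\sum_{r=0}^n\sum_{s=0}^m\mathcal{K}_{n,m;r,s}(z/q,w;q)\,\Phi_{r,s}(u,v;z,w;q)=\Phi_{n,m}(uz,vw;z,w;q).\]
   Context: For $n\in\mathbb{Z}$, $(a;q)_n=(a;q)_\infty/(aq^n;q)_\infty$ ($1/(q;q)_n=0$ for $n<0$), $(a_1,\dots,a_k;q)_n=\prod_i(a_i;q)_n$. For integers $n,m$: $\Phi_{n,m}(z,w;q):=\frac{(zwq;q)_{n+m}}{(q,zq,zwq;q)_n(q,wq,zwq;q)_m}$; \[\mathcal{K}_{n,m;r,s}(z,w;q):=\frac{z^rw^sq^{r^2-rs+s^2}}{(q;q)_{n-r}(q;q)_{m-s}};\] and \[\Phi_{n,m}(u,v;z,w;q):=\Phi_{n,m}(z/q,w;q)-\frac{uz}{(z;q)_2}\Phi_{n-1,m}(zq,w/q;q)+\frac{uvzw^2}{(w,zw;q)_2}\Phi_{n-1,m-1}(z,wq;q).\] (One has $\Phi_{n,m}(1,1;z,w;q)=\Phi_{n,m}(z,w;q)$.) *)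

theory Defs
  imports Complex_Main
begin

text \<open>q-Pochhammer symbol (a;q)_n for integer n, defined as (a;q)_inf/(aq^n;q)_inf:
  for n >= 0 the finite product prod_{k<n} (1 - a q^k);
  for n < 0 the value 1 / prod_{k=1}^{-n} (1 - a q^(-k)).\<close>
definition qpoch :: "complex \<Rightarrow> complex \<Rightarrow> int \<Rightarrow> complex" where
  "qpoch a q n =
     (if 0 \<le> n then (\<Prod>k<nat n. (1 - a * q ^ k))
      else 1 / (\<Prod>k<nat (- n). (1 - a / q ^ (k + 1))))"

text \<open>Phi_{n,m}(z,w;q) = (zwq;q)_{n+m} / ((q,zq,zwq;q)_n (q,wq,zwq;q)_m).
  Since 1/(q;q)_n = 0 for n < 0, the whole expression is 0 when n < 0 or m < 0.\<close>
definition Phi :: "int \<Rightarrow> int \<Rightarrow> complex \<Rightarrow> complex \<Rightarrow> complex \<Rightarrow> complex" where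
  "Phi n m z w q =
     (if n < 0 \<or> m < 0 then 0
      else qpoch (z * w * q) q (n + m) /
        (qpoch q q n * qpoch (z * q) q n * qpoch (z * w * q) q n *
         qpoch q q m * qpoch (w * q) q m * qpoch (z * w * q) q m))"

definition Kc :: "nat \<Rightarrow> nat \<Rightarrow> nat \<Rightarrow> nat \<Rightarrow> complex \<Rightarrow> complex \<Rightarrow> complex \<Rightarrow> complex" where
  "Kc n m r s z w q =
     z ^ r * w ^ s * q ^ (r\<^sup>2 + s\<^sup>2 - r * s) /
       (qpoch q q (int n - int r) * qpoch q q (int m - int s))"

definition Phi4 :: "int \<Rightarrow> int \<Rightarrow> complex \<Rightarrow> complex \<Rightarrow> complex \<Rightarrow> complex \<Rightarrow> complex \<Rightarrow> complex" where
  "Phi4 n m u v z w q =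
     Phi n m (z / q) w q
     - u * z / qpoch z q 2 * Phi (n - 1) m (z * q) (w / q) q
     + u * v * z * w\<^sup>2 / (qpoch w q 2 * qpoch (z * w) q 2) * Phi (n - 1) (m - 1) z (w * q) q"

end

theory Submission
  imports Defs
begin


definition pp :: "complex \<Rightarrow> complex \<Rightarrow> nat \<Rightarrow> complex" where
  "pp a q n = (\<Prod>k<n. (1 - a * q ^ k))"

lemma qpoch_nat: "qpoch a q (int n) = pp a q n"
  by (simp add: qpoch_def pp_def)

lemma pp_0[simp]: "pp a q 0 = 1" by (simp add: pp_def)

lemma pp_Suc: "pp a q (Suc n) = pp a q n * (1 - a * q ^ n)"
  by (simp add: pp_def)

lemma pp_Suc': "pp a q (Suc n) = (1 - a) * pp (a * q) q n"
  by (induction n) (simp_all add: pp_Suc[of a q "Suc _"] pp_Suc[of "a*q"] pp_Suc[of a q 0] mult_ac)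

lemma pp_add: "pp a q (n + k) = pp a q n * pp (a * q ^ n) q k"
  by (induction k) (simp_all add: pp_Suc power_add mult_ac)

lemma pp_nz_mono: "pp a q N \<noteq> 0 \<Longrightarrow> j \<le> N \<Longrightarrow> pp a q j \<noteq> 0"
  using pp_add[of a q j "N - j"] by auto

lemma pow_split: "a \<le> b \<Longrightarrow> (x::complex) ^ a * x ^ (b - a) = x ^ b"
  by (metis le_add_diff_inverse power_add)

fun qb :: "complex \<Rightarrow> nat \<Rightarrow> nat \<Rightarrow> complex" where
  "qb q 0 0 = 1"
| "qb q 0 (Suc k) = 0"
| "qb q (Suc n) 0 = 1"
| "qb q (Suc n) (Suc k) = qb q n k + q ^ Suc k * qb q n (Suc k)"

lemma qb_0[simp]: "qb q n 0 = 1" by (cases n) auto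

lemma qb_gt[simp]: "n < k \<Longrightarrow> qb q n k = 0"
proof (induction n arbitrary: k)
  case 0 then show ?case by (cases k) auto
next
  case (Suc n) then show ?case by (cases k) auto
qed

lemma qb_fact: "k \<le> n \<Longrightarrow> qb q n k * pp q q k * pp q q (n - k) = pp q q n"
proof (induction n arbitrary: k)
  case 0 then show ?case by simp
next
  case (Suc n)
  show ?case
  proof (cases k)
    case 0 then show ?thesis by simp
  next
    case (Suc j)
    have j: "j \<le> n" using Suc.prems Suc by simp
    have h1: "qb q n j * pp q q (Suc j) * pp q q (n - j) = pp q q n * (1 - q ^ Suc j)"
      using Suc.IH[OF j] by (simp add: pp_Suc mult_ac)
    have h2: "q ^ Suc j * qb q n (Suc j) * pp q q (Suc j) * pp q q (n - j) = q ^ Suc j * pp q q n * (1 - q ^ (n - j))"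
    proof (cases "j < n")
      case True
      have e: "n - j = Suc (n - Suc j)" using True by simp
      have I: "qb q n (Suc j) * pp q q (Suc j) * pp q q (n - Suc j) = pp q q n" using Suc.IH[of "Suc j"] True by simp
      have p: "pp q q (n - j) = pp q q (n - Suc j) * (1 - q ^ (n - j))"
        unfolding e pp_Suc by (simp add: e)
      show ?thesis unfolding p using I by (simp add: mult_ac)
    next
      case False then have "j = n" using j by simp
      then show ?thesis by simp
    qed
    have "qb q (Suc n) k * pp q q k * pp q q (Suc n - k)
        = qb q n j * pp q q (Suc j) * pp q q (n - j) + q ^ Suc j * qb q n (Suc j) * pp q q (Suc j) * pp q q (n - j)"
      using Suc by (simp add: algebra_simps)
    also have "\<dots> = pp q q n * (1 - q ^ Suc j) + q ^ Suc j * pp q q n * (1 - q ^ (n - j))"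
      using h1 h2 by simp
    also have "\<dots> = pp q q n * (1 - q ^ Suc n)"
    proof -
      have e: "q ^ Suc n = q ^ Suc j * q ^ (n - j)" using j by (simp add: power_add[symmetric])
      show ?thesis unfolding e by (simp add: algebra_simps)
    qed
    finally show ?thesis by (simp add: pp_Suc)
  qed
qed

lemma qb_rel: "qb q m (Suc k) * (1 - q ^ Suc k) = qb q m k * (1 - q ^ (m - k))"
proof (induction m arbitrary: k)
  case 0 then show ?case by (cases k) auto
next
  case (Suc m)
  show ?case
  proof (cases k)
    case 0
    have I: "qb q m (Suc 0) * (1 - q) = 1 - q ^ m" using Suc.IH[of 0] by simp
    have "qb q (Suc m) (Suc 0) * (1 - q) = (1 - q) + q * (qb q m (Suc 0) * (1 - q))"
      by (simp add: algebra_simps)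
    also have "\<dots> = 1 - q ^ Suc m" unfolding I by (simp add: algebra_simps)
    finally show ?thesis using 0 by simp
  next
    case (Suc j)
    have A: "qb q (Suc m) (Suc (Suc j)) * (1 - q ^ Suc (Suc j))
       = qb q m (Suc j) * (1 - q ^ Suc (Suc j)) + q ^ Suc (Suc j) * (qb q m (Suc j) * (1 - q ^ (m - Suc j)))"
    proof -
      have A0: "qb q (Suc m) (Suc (Suc j)) * (1 - q ^ Suc (Suc j))
       = qb q m (Suc j) * (1 - q ^ Suc (Suc j)) + q ^ Suc (Suc j) * (qb q m (Suc (Suc j)) * (1 - q ^ Suc (Suc j)))"
        by (simp only: qb.simps) (simp add: algebra_simps)
      show ?thesis unfolding A0 Suc.IH[of "Suc j"] ..
    qed
    have B: "qb q (Suc m) (Suc j) * (1 - q ^ (Suc m - Suc j))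
       = qb q m (Suc j) * (1 - q ^ Suc j) + q ^ Suc j * qb q m (Suc j) * (1 - q ^ (m - j))"
    proof -
      have B0: "qb q (Suc m) (Suc j) * (1 - q ^ (Suc m - Suc j))
       = qb q m j * (1 - q ^ (m - j)) + q ^ Suc j * qb q m (Suc j) * (1 - q ^ (m - j))"
        by (simp only: qb.simps diff_Suc_Suc) (simp add: algebra_simps)
      show ?thesis unfolding B0 Suc.IH[of j, symmetric] ..
    qed
    show ?thesis
    proof (cases "Suc j \<le> m")
      case True
      have e1: "q ^ Suc (Suc j) * q ^ (m - Suc j) = q ^ Suc m" using pow_split[of "Suc (Suc j)" "Suc m" q] True by simp
      have e2: "q ^ Suc j * q ^ (m - j) = q ^ Suc m" using True by (simp add: power_add[symmetric])
      have A': "qb q m (Suc j) * (1 - q ^ Suc (Suc j)) + q ^ Suc (Suc j) * (qb q m (Suc j) * (1 - q ^ (m - Suc j)))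
        = qb q m (Suc j) * (1 - q ^ Suc (Suc j) * q ^ (m - Suc j))" by (simp add: algebra_simps)
      have B': "qb q m (Suc j) * (1 - q ^ Suc j) + q ^ Suc j * qb q m (Suc j) * (1 - q ^ (m - j))
        = qb q m (Suc j) * (1 - q ^ Suc j * q ^ (m - j))" by (simp add: algebra_simps)
      show ?thesis unfolding \<open>k = Suc j\<close> A B A' B' e1 e2 ..
    next
      case False
      then show ?thesis unfolding \<open>k = Suc j\<close> A B by simp
    qed
  qed
qed

lemma qb_rel2: "qb q (Suc m) j * (1 - q ^ (Suc m - j)) = qb q m j * (1 - q ^ Suc m)"
proof -
  have "qb q (Suc m) j * (1 - q ^ (Suc m - j)) = qb q (Suc m) (Suc j) * (1 - q ^ Suc j)"
    using qb_rel[of q "Suc m" j] by simp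
  also have "\<dots> = qb q m j * (1 - q ^ Suc j) + q ^ Suc j * (qb q m (Suc j) * (1 - q ^ Suc j))"
    by (simp add: algebra_simps)
  also have "\<dots> = qb q m j * (1 - q ^ Suc j) + q ^ Suc j * (qb q m j * (1 - q ^ (m - j)))"
    using qb_rel[of q m j] by simp
  also have "\<dots> = qb q m j * (1 - q ^ Suc m)"
  proof (cases "j \<le> m")
    case True
    have e: "q ^ Suc j * q ^ (m - j) = q ^ Suc m" using True by (simp add: power_add[symmetric])
    have "qb q m j * (1 - q ^ Suc j) + q ^ Suc j * (qb q m j * (1 - q ^ (m - j)))
       = qb q m j * (1 - q ^ Suc j * q ^ (m - j))" by (simp add: algebra_simps)
    then show ?thesis unfolding e .
  next
    case False then show ?thesis by simp
  qed
  finally show ?thesis .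
qed

lemma pascal_sum:
  "(\<Sum>k\<le>Suc n. qb q (Suc n) k * g k) = (\<Sum>k\<le>n. qb q n k * g (Suc k)) + (\<Sum>k\<le>n. q ^ k * qb q n k * g k)"
proof -
  have "(\<Sum>k\<le>Suc n. qb q (Suc n) k * g k) = g 0 + (\<Sum>k\<le>n. qb q (Suc n) (Suc k) * g (Suc k))"
    by (subst sum.atMost_Suc_shift) simp
  also have "\<dots> = (\<Sum>k\<le>n. qb q n k * g (Suc k)) + (g 0 + (\<Sum>k\<le>n. q ^ Suc k * qb q n (Suc k) * g (Suc k)))"
    by (simp add: algebra_simps sum.distrib)
  also have "g 0 + (\<Sum>k\<le>n. q ^ Suc k * qb q n (Suc k) * g (Suc k)) = (\<Sum>k\<le>Suc n. q ^ k * qb q n k * g k)"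
    by (subst sum.atMost_Suc_shift) simp
  also have "\<dots> = (\<Sum>k\<le>n. q ^ k * qb q n k * g k)"
    by (simp add: sum.atMost_Suc)
  finally show ?thesis .
qed


lemma pow_r2: "(y::complex) ^ (r * 2) = y ^ r * y ^ r"
  by (simp add: power_mult power2_eq_square)

lemma ex1: "Suc j \<le> r \<Longrightarrow> Suc j + Suc r * (r - j) = r * (r - Suc j) + 2 * r + 1"
proof -
  assume "Suc j \<le> r" then obtain d where "r = Suc j + d" using le_Suc_ex by blast
  then show ?thesis by (simp add: algebra_simps)
qed

lemma ex2: "j \<le> r \<Longrightarrow> j + Suc r * (r - j) = r + r * (r - j)"
proof -
  assume "j \<le> r" then obtain d where "r = j + d" using le_Suc_ex by blast
  then show ?thesis by (simp add: algebra_simps)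
qed

definition XF :: "complex \<Rightarrow> nat \<Rightarrow> nat \<Rightarrow> complex \<Rightarrow> nat \<Rightarrow> complex" where
  "XF q n k x r = qb q n r * qb q r k * x ^ r * q ^ (r * (r - k)) * pp (x * q ^ (r + 1)) q (n - r)"

lemma Xsum: "q \<noteq> 0 \<Longrightarrow> (\<Sum>r\<le>n. XF q n k x r) = qb q n k * x ^ k"
proof (induction n arbitrary: k x)
  case 0 then show ?case by (cases k) (simp_all add: XF_def)
next
  case (Suc n)
  define g where "g r = qb q r k * x ^ r * q ^ (r * (r - k)) * pp (x * q ^ (r + 1)) q (Suc n - r)" for r
  define Dt where "Dt r = qb q n r * qb q r k * x ^ (r + 1) * q ^ (r * (r - k) + 2 * r + 1) * pp (x * q ^ (r + 2)) q (n - r)" for r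
  have "(\<Sum>r\<le>Suc n. XF q (Suc n) k x r) = (\<Sum>r\<le>Suc n. qb q (Suc n) r * g r)"
    by (simp add: XF_def g_def mult_ac)
  also have "\<dots> = (\<Sum>r\<le>n. qb q n r * g (Suc r)) + (\<Sum>r\<le>n. q ^ r * qb q n r * g r)"
    by (rule pascal_sum)
  also have "(\<Sum>r\<le>n. q ^ r * qb q n r * g r) = (\<Sum>r\<le>n. XF q n k (x * q) r - Dt r)"
  proof (rule sum.cong[OF refl])
    fix r assume "r \<in> {..n}" then have r: "r \<le> n" by simp
    have e: "Suc n - r = Suc (n - r)" using r by simp
    have c1: "x * q * q ^ (r + 1) = x * q ^ (r + 2)" by (simp add: mult_ac)
    have c2: "x * q ^ (r + 1) * q = x * q ^ (r + 2)" by (simp add: mult_ac)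
    show "q ^ r * qb q n r * g r = XF q n k (x * q) r - Dt r"
      unfolding g_def XF_def Dt_def e pp_Suc' c1 c2
      by (simp add: power_add power_mult_distrib pow_r2 algebra_simps)
  qed
  also have "\<dots> = (\<Sum>r\<le>n. XF q n k (x * q) r) - (\<Sum>r\<le>n. Dt r)"
    by (simp add: sum_subtractf)
  also have "(\<Sum>r\<le>n. XF q n k (x * q) r) = qb q n k * (x * q) ^ k"
    using Suc.IH Suc.prems by simp
  finally have main: "(\<Sum>r\<le>Suc n. XF q (Suc n) k x r) =
      (\<Sum>r\<le>n. qb q n r * g (Suc r)) + (qb q n k * (x * q) ^ k - (\<Sum>r\<le>n. Dt r))" .
  show ?case
  proof (cases k)
    case 0
    have "(\<Sum>r\<le>n. qb q n r * g (Suc r)) = (\<Sum>r\<le>n. Dt r)"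
    proof (rule sum.cong[OF refl])
      fix r assume "r \<in> {..n}"
      have c: "x * q ^ (Suc r + 1) = x * q ^ (r + 2)" by simp
      show "qb q n r * g (Suc r) = Dt r"
        unfolding g_def Dt_def 0 c by (simp add: power_add pow_r2 algebra_simps)
    qed
    then show ?thesis using main 0 by (simp del: sum.atMost_Suc)
  next
    case (Suc j)
    define E1 where "E1 r = qb q n r * qb q r j * x ^ Suc r * q ^ (Suc r * (r - j)) * pp (x * q ^ (r + 2)) q (n - r)" for r
    have split: "qb q n r * g (Suc r) = E1 r + Dt r" if "r \<le> n" for r
    proof (cases "Suc j \<le> r")
      case True
      have pw: "q ^ Suc j * q ^ (Suc r * (r - j)) = q ^ (r * (r - Suc j) + 2 * r + 1)"
        unfolding power_add[symmetric] ex1[OF True] ..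
      have c: "x * q ^ (Suc r + 1) = x * q ^ (r + 2)" by simp
      have "qb q n r * g (Suc r) = qb q n r * (qb q r j + q ^ Suc j * qb q r (Suc j)) * x ^ Suc r * q ^ (Suc r * (r - j)) * pp (x * q ^ (r + 2)) q (n - r)"
        unfolding g_def Suc c by (simp add: mult_ac)
      also have "\<dots> = E1 r + qb q n r * qb q r (Suc j) * x ^ Suc r * (q ^ Suc j * q ^ (Suc r * (r - j))) * pp (x * q ^ (r + 2)) q (n - r)"
        unfolding E1_def by (simp add: algebra_simps)
      also have "\<dots> = E1 r + Dt r" unfolding pw Dt_def Suc by simp
      finally show ?thesis .
    next
      case False
      have c: "x * q ^ (Suc r + 1) = x * q ^ (r + 2)" by simp
      have z: "qb q r (Suc j) = 0" using False by simp
      show ?thesis unfolding g_def Dt_def E1_def Suc c using z by (simp add: algebra_simps)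
    qed
    have E1s: "q ^ j * E1 r = x * XF q n j (x * q) r" if "r \<le> n" for r
    proof (cases "j \<le> r")
      case True
      have pw: "q ^ j * q ^ (Suc r * (r - j)) = q ^ r * q ^ (r * (r - j))"
        unfolding power_add[symmetric] ex2[OF True] ..
      have c: "x * q * q ^ (r + 1) = x * q ^ (r + 2)" by (simp add: mult_ac)
      have "q ^ j * E1 r = qb q n r * qb q r j * x ^ Suc r * (q ^ j * q ^ (Suc r * (r - j))) * pp (x * q ^ (r + 2)) q (n - r)"
        unfolding E1_def by (simp add: mult_ac)
      also have "\<dots> = x * XF q n j (x * q) r"
        unfolding pw XF_def c by (simp add: power_mult_distrib mult_ac)
      finally show ?thesis .
    next
      case False
      then show ?thesis by (simp add: E1_def XF_def)
    qed
    have sE: "q ^ j * (\<Sum>r\<le>n. E1 r) = x * (qb q n j * (x * q) ^ j)"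
    proof -
      have "q ^ j * (\<Sum>r\<le>n. E1 r) = (\<Sum>r\<le>n. x * XF q n j (x * q) r)"
        unfolding sum_distrib_left by (rule sum.cong) (simp_all add: E1s)
      also have "\<dots> = x * (qb q n j * (x * q) ^ j)"
        unfolding sum_distrib_left[symmetric] using Suc.IH Suc.prems by simp
      finally show ?thesis .
    qed
    have "(\<Sum>r\<le>n. qb q n r * g (Suc r)) = (\<Sum>r\<le>n. E1 r) + (\<Sum>r\<le>n. Dt r)"
      unfolding sum.distrib[symmetric] by (rule sum.cong) (simp_all add: split)
    then have tot: "(\<Sum>r\<le>Suc n. XF q (Suc n) k x r) = (\<Sum>r\<le>n. E1 r) + qb q n k * (x * q) ^ k"
      unfolding main by simp
    have "q ^ j * (\<Sum>r\<le>Suc n. XF q (Suc n) k x r) = q ^ j * (qb q (Suc n) k * x ^ k)"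
      unfolding tot distrib_left sE unfolding Suc
      by (simp add: power_mult_distrib algebra_simps)
    then show ?thesis using Suc.prems by simp
  qed
qed


definition VF :: "complex \<Rightarrow> nat \<Rightarrow> nat \<Rightarrow> complex \<Rightarrow> nat \<Rightarrow> complex" where
  "VF q n m a k = qb q n k * qb q m k * pp q q k * a ^ k * q ^ (k * k) * pp (a * q ^ (k + 1)) q (n - k)"

lemma qb_pp_Suc: "qb q m (Suc k) * pp q q (Suc k) = pp q q k * qb q m k * (1 - q ^ (m - k))"
  using qb_rel[of q m k] by (simp add: pp_Suc mult_ac)

lemma V2sum: "(\<Sum>k\<le>n. VF q n m a k) = pp (a * q ^ (m + 1)) q n"
proof (induction n arbitrary: a)
  case 0 then show ?case by (simp add: VF_def)
next
  case (Suc n)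
  define g where "g k = qb q m k * pp q q k * a ^ k * q ^ (k * k) * pp (a * q ^ (k + 1)) q (Suc n - k)" for k
  define Dt where "Dt k = qb q n k * qb q m k * pp q q k * a ^ (k + 1) * q ^ (k * k + 2 * k + 1) * pp (a * q ^ (k + 2)) q (n - k)" for k
  have "(\<Sum>k\<le>Suc n. VF q (Suc n) m a k) = (\<Sum>k\<le>Suc n. qb q (Suc n) k * g k)"
    by (simp add: VF_def g_def mult_ac del: sum.atMost_Suc)
  also have "\<dots> = (\<Sum>k\<le>n. qb q n k * g (Suc k)) + (\<Sum>k\<le>n. q ^ k * qb q n k * g k)"
    by (rule pascal_sum)
  also have "(\<Sum>k\<le>n. q ^ k * qb q n k * g k) = (\<Sum>k\<le>n. VF q n m (a * q) k - Dt k)"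
  proof (rule sum.cong[OF refl])
    fix k assume "k \<in> {..n}" then have r: "k \<le> n" by simp
    have e: "Suc n - k = Suc (n - k)" using r by simp
    have c1: "a * q * q ^ (k + 1) = a * q ^ (k + 2)" by (simp add: mult_ac)
    have c2: "a * q ^ (k + 1) * q = a * q ^ (k + 2)" by (simp add: mult_ac)
    show "q ^ k * qb q n k * g k = VF q n m (a * q) k - Dt k"
      unfolding g_def VF_def Dt_def e pp_Suc' c1 c2
      by (simp add: power_add power_mult_distrib pow_r2 algebra_simps)
  qed
  also have "\<dots> = (\<Sum>k\<le>n. VF q n m (a * q) k) - (\<Sum>k\<le>n. Dt k)"
    by (simp add: sum_subtractf)
  also have "(\<Sum>k\<le>n. qb q n k * g (Suc k)) = (\<Sum>k\<le>n. Dt k - a * q ^ (m + 1) * VF q n m (a * q) k)"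
  proof (rule sum.cong[OF refl])
    fix k assume "k \<in> {..n}"
    have c: "a * q ^ (Suc k + 1) = a * q ^ (k + 2)" by simp
    have "qb q n k * g (Suc k) = qb q n k * (qb q m (Suc k) * pp q q (Suc k)) * a ^ Suc k * q ^ (Suc k * Suc k) * pp (a * q ^ (k + 2)) q (n - k)"
      unfolding g_def c by (simp add: mult_ac)
    also have "\<dots> = Dt k - qb q n k * qb q m k * pp q q k * a ^ Suc k * (q ^ (Suc k * Suc k) * q ^ (m - k)) * pp (a * q ^ (k + 2)) q (n - k)"
      unfolding qb_pp_Suc Dt_def by (simp add: power_add pow_r2 algebra_simps)
    also have "\<dots> = Dt k - a * q ^ (m + 1) * VF q n m (a * q) k"
    proof (cases "k \<le> m")
      case True
      have ee: "Suc k * Suc k + (m - k) = (m + 1) + (k + k * k)" using True by (simp add: algebra_simps)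
      have pw: "q ^ (Suc k * Suc k) * q ^ (m - k) = q ^ (m + 1) * (q ^ k * q ^ (k * k))"
        unfolding power_add[symmetric] ee ..
      have c1: "a * q * q ^ (k + 1) = a * q ^ (k + 2)" by (simp add: mult_ac)
      show ?thesis unfolding pw VF_def c1 by (simp add: power_mult_distrib mult_ac)
    next
      case False then show ?thesis by (simp add: VF_def)
    qed
    finally show "qb q n k * g (Suc k) = Dt k - a * q ^ (m + 1) * VF q n m (a * q) k" .
  qed
  also have "(\<Sum>k\<le>n. Dt k - a * q ^ (m + 1) * VF q n m (a * q) k) = (\<Sum>k\<le>n. Dt k) - a * q ^ (m + 1) * (\<Sum>k\<le>n. VF q n m (a * q) k)"
    by (simp add: sum_subtractf sum_distrib_left)
  finally have "(\<Sum>k\<le>Suc n. VF q (Suc n) m a k) = (1 - a * q ^ (m + 1)) * (\<Sum>k\<le>n. VF q n m (a * q) k)"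
    by (simp add: algebra_simps)
  also have "\<dots> = pp (a * q ^ (m + 1)) q (Suc n)"
    unfolding Suc.IH pp_Suc' by (simp add: mult_ac)
  finally show ?case .
qed

definition WF :: "complex \<Rightarrow> nat \<Rightarrow> nat \<Rightarrow> complex \<Rightarrow> nat \<Rightarrow> complex" where
  "WF q n m a k = q ^ ((n - k) * (m - k)) * qb q n k * qb q m k * pp q q k * pp (a * q ^ (k + 1)) q (m - k)"

lemma V1sum: "(\<Sum>k\<le>n. WF q n m a k) = pp (a * q ^ (n + 1)) q m"
proof (induction n arbitrary: a m)
  case 0 then show ?case by (simp add: WF_def)
next
  case (Suc n)
  define g where "g k = q ^ ((Suc n - k) * (m - k)) * qb q m k * pp q q k * pp (a * q ^ (k + 1)) q (m - k)" for k
  have "(\<Sum>k\<le>Suc n. WF q (Suc n) m a k) = (\<Sum>k\<le>Suc n. qb q (Suc n) k * g k)"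
    by (simp add: WF_def g_def mult_ac del: sum.atMost_Suc)
  also have "\<dots> = (\<Sum>k\<le>n. qb q n k * g (Suc k)) + (\<Sum>k\<le>n. q ^ k * qb q n k * g k)"
    by (rule pascal_sum)
  also have "(\<Sum>k\<le>n. q ^ k * qb q n k * g k) = q ^ m * (\<Sum>k\<le>n. WF q n m a k)"
    unfolding sum_distrib_left
  proof (rule sum.cong[OF refl])
    fix k assume "k \<in> {..n}" then have r: "k \<le> n" by simp
    show "q ^ k * qb q n k * g k = q ^ m * WF q n m a k"
    proof (cases "k \<le> m")
      case True
      have ee: "k + (Suc n - k) * (m - k) = m + (n - k) * (m - k)"
      proof -
        obtain d where d: "n = k + d" using r le_Suc_ex by blast
        obtain e where e: "m = k + e" using True le_Suc_ex by blast
        show ?thesis unfolding d e by (simp add: algebra_simps)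
      qed
      have pw: "q ^ k * q ^ ((Suc n - k) * (m - k)) = q ^ m * q ^ ((n - k) * (m - k))"
        unfolding power_add[symmetric] ee ..
      show ?thesis unfolding g_def WF_def using pw by (simp add: mult_ac)
    next
      case False then show ?thesis by (simp add: g_def WF_def)
    qed
  qed
  finally have main: "(\<Sum>k\<le>Suc n. WF q (Suc n) m a k) = (\<Sum>k\<le>n. qb q n k * g (Suc k)) + q ^ m * pp (a * q ^ (n + 1)) q m"
    using Suc.IH by simp
  show ?case
  proof (cases m)
    case 0
    then show ?thesis using main by (simp add: g_def del: sum.atMost_Suc)
  next
    case (Suc m')
    have "(\<Sum>k\<le>n. qb q n k * g (Suc k)) = (1 - q ^ Suc m') * (\<Sum>k\<le>n. WF q n m' (a * q) k)"
      unfolding sum_distrib_left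
    proof (rule sum.cong[OF refl])
      fix k assume "k \<in> {..n}"
      have c: "a * q ^ (Suc k + 1) = a * q * q ^ (k + 1)" by (simp add: mult_ac)
      have "qb q n k * g (Suc k) = q ^ ((n - k) * (m' - k)) * qb q n k * (qb q (Suc m') (Suc k) * pp q q (Suc k)) * pp (a * q * q ^ (k + 1)) q (m' - k)"
        unfolding g_def Suc c by (simp add: mult_ac)
      also have "\<dots> = q ^ ((n - k) * (m' - k)) * qb q n k * (pp q q k * (qb q (Suc m') k * (1 - q ^ (Suc m' - k)))) * pp (a * q * q ^ (k + 1)) q (m' - k)"
        unfolding qb_pp_Suc by (simp add: mult_ac)
      also have "\<dots> = (1 - q ^ Suc m') * WF q n m' (a * q) k"
        unfolding qb_rel2 WF_def by (simp add: mult_ac)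
      finally show "qb q n k * g (Suc k) = (1 - q ^ Suc m') * WF q n m' (a * q) k" .
    qed
    also have "\<dots> = (1 - q ^ Suc m') * pp (a * q ^ (n + 2)) q m'"
      unfolding Suc.IH by (simp add: mult_ac)
    finally have S1: "(\<Sum>k\<le>n. qb q n k * g (Suc k)) = (1 - q ^ Suc m') * pp (a * q ^ (n + 2)) q m'" .
    have p1: "pp (a * q ^ (n + 1)) q (Suc m') = (1 - a * q ^ (n + 1)) * pp (a * q ^ (n + 2)) q m'"
      unfolding pp_Suc' by (simp add: mult_ac)
    have p2: "pp (a * q ^ (Suc n + 1)) q (Suc m') = pp (a * q ^ (n + 2)) q m' * (1 - a * q ^ (n + 2) * q ^ m')"
      unfolding pp_Suc by (simp add: mult_ac)
    show ?thesis unfolding main S1 unfolding Suc p1 p2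
      by (simp add: power_add algebra_simps)
  qed
qed


definition RR :: "complex \<Rightarrow> complex \<Rightarrow> nat \<Rightarrow> nat \<Rightarrow> complex" where
  "RR q a r s = pp (a * q) q (r + s) / (pp (a * q) q r * pp (a * q) q s)"

lemma pp_split_div:
  assumes "pp (a * q) q s \<noteq> 0" "k \<le> s"
  shows "pp (a * q ^ (k + 1)) q (s - k) / pp (a * q) q s = 1 / pp (a * q) q k"
proof -
  have "pp (a * q) q s = pp (a * q) q k * pp (a * q ^ (k + 1)) q (s - k)"
    using pp_add[of "a * q" q k "s - k"] assms(2) by (simp add: mult_ac)
  then show ?thesis using assms(1) by auto
qed

lemma V1div:
  assumes "pp (a * q) q (r + s) \<noteq> 0"
  shows "RR q a r s = (\<Sum>k\<le>r. q ^ ((r - k) * (s - k)) * qb q r k * qb q s k * pp q q k / pp (a * q) q k)"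
proof -
  have ns: "pp (a * q) q s \<noteq> 0" using pp_nz_mono[OF assms] by simp
  have nr: "pp (a * q) q r \<noteq> 0" using pp_nz_mono[OF assms] by simp
  have "pp (a * q) q (r + s) = pp (a * q) q r * pp (a * q ^ (r + 1)) q s"
    using pp_add[of "a * q" q r s] by (simp add: mult_ac)
  then have "RR q a r s = pp (a * q ^ (r + 1)) q s / pp (a * q) q s"
    unfolding RR_def using nr by simp
  also have "\<dots> = (\<Sum>k\<le>r. WF q r s a k) / pp (a * q) q s" unfolding V1sum ..
  also have "\<dots> = (\<Sum>k\<le>r. WF q r s a k / pp (a * q) q s)" by (simp add: sum_divide_distrib)
  also have "\<dots> = (\<Sum>k\<le>r. q ^ ((r - k) * (s - k)) * qb q r k * qb q s k * pp q q k / pp (a * q) q k)"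
  proof (rule sum.cong[OF refl])
    fix k assume "k \<in> {..r}"
    show "WF q r s a k / pp (a * q) q s = q ^ ((r - k) * (s - k)) * qb q r k * qb q s k * pp q q k / pp (a * q) q k"
    proof (cases "k \<le> s")
      case True
      have "WF q r s a k / pp (a * q) q s = q ^ ((r - k) * (s - k)) * qb q r k * qb q s k * pp q q k * (pp (a * q ^ (k + 1)) q (s - k) / pp (a * q) q s)"
        unfolding WF_def by simp
      then show ?thesis unfolding pp_split_div[OF ns True] by simp
    next
      case False then show ?thesis by (simp add: WF_def)
    qed
  qed
  finally show ?thesis .
qed

lemma V2div:
  assumes "pp (a * q) q (n + m) \<noteq> 0"
  shows "(\<Sum>k\<le>n. qb q n k * qb q m k * pp q q k * a ^ k * q ^ (k * k) / pp (a * q) q k) = RR q a n m"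
proof -
  have nn: "pp (a * q) q n \<noteq> 0" using pp_nz_mono[OF assms] by simp
  have nm: "pp (a * q) q m \<noteq> 0" using pp_nz_mono[OF assms] by simp
  have "pp (a * q) q (m + n) = pp (a * q) q m * pp (a * q ^ (m + 1)) q n"
    using pp_add[of "a * q" q m n] by (simp add: mult_ac)
  then have "RR q a n m = pp (a * q ^ (m + 1)) q n / pp (a * q) q n"
    unfolding RR_def using nm by (simp add: add.commute)
  also have "\<dots> = (\<Sum>k\<le>n. VF q n m a k) / pp (a * q) q n" unfolding V2sum ..
  also have "\<dots> = (\<Sum>k\<le>n. VF q n m a k / pp (a * q) q n)" by (simp add: sum_divide_distrib)
  also have "\<dots> = (\<Sum>k\<le>n. qb q n k * qb q m k * pp q q k * a ^ k * q ^ (k * k) / pp (a * q) q k)"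
  proof (rule sum.cong[OF refl])
    fix k assume "k \<in> {..n}" then have kn: "k \<le> n" by simp
    have "VF q n m a k / pp (a * q) q n = qb q n k * qb q m k * pp q q k * a ^ k * q ^ (k * k) * (pp (a * q ^ (k + 1)) q (n - k) / pp (a * q) q n)"
      unfolding VF_def by simp
    then show "VF q n m a k / pp (a * q) q n = qb q n k * qb q m k * pp q q k * a ^ k * q ^ (k * k) / pp (a * q) q k"
      unfolding pp_split_div[OF nn kn] by simp
  qed
  finally show ?thesis by simp
qed

lemma rs_le: "(r::nat) * s \<le> r\<^sup>2 + s\<^sup>2"
proof (cases "r \<le> s")
  case True then have "r * s \<le> s * s" by (simp add: mult_le_mono1)
  then show ?thesis by (simp add: power2_eq_square add_increasing)
next
  case False then have "r * s \<le> r * r" by (simp add: mult_le_mono2)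
  then show ?thesis by (simp add: power2_eq_square trans_le_add1)
qed

lemma ex3: "(k::nat) \<le> r \<Longrightarrow> k \<le> s \<Longrightarrow> r\<^sup>2 + s\<^sup>2 - r * s + (r - k) * (s - k) = k * k + r * (r - k) + s * (s - k)"
proof -
  assume a: "k \<le> r" "k \<le> s"
  obtain d where d: "r = k + d" using a le_Suc_ex by blast
  obtain e where e: "s = k + e" using a le_Suc_ex by blast
  have eq: "r\<^sup>2 + s\<^sup>2 + (r - k) * (s - k) = r * s + (k * k + r * (r - k) + s * (s - k))"
    unfolding d e by (simp add: algebra_simps power2_eq_square)
  show ?thesis using eq rs_le[of r s] by linarith
qed


lemma sum_prod_c: "(\<Sum>r\<in>A. \<Sum>s\<in>B. (c::complex) * (f r * g s)) = c * (sum f A * sum g B)"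
proof -
  have "c * (sum f A * sum g B) = c * (\<Sum>r\<in>A. \<Sum>s\<in>B. f r * g s)" by (simp only: sum_product)
  also have "\<dots> = (\<Sum>r\<in>A. c * (\<Sum>s\<in>B. f r * g s))" by (simp only: sum_distrib_left)
  also have "\<dots> = (\<Sum>r\<in>A. \<Sum>s\<in>B. c * (f r * g s))" by (simp only: sum_distrib_left)
  finally show ?thesis by simp
qed

lemma MAIN:
  assumes q: "q \<noteq> 0" and nz: "pp (x * y * q) q (n + m) \<noteq> 0"
  shows "(\<Sum>r\<le>n. \<Sum>s\<le>m. qb q n r * qb q m s * x ^ r * y ^ s * q ^ (r\<^sup>2 + s\<^sup>2 - r * s)
      * pp (x * q ^ (r + 1)) q (n - r) * pp (y * q ^ (s + 1)) q (m - s) * RR q (x * y) r s) = RR q (x * y) n m"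
proof -
  define M where "M r s = qb q n r * qb q m s * x ^ r * y ^ s * q ^ (r\<^sup>2 + s\<^sup>2 - r * s)
      * pp (x * q ^ (r + 1)) q (n - r) * pp (y * q ^ (s + 1)) q (m - s)" for r s
  define f where "f r s k = q ^ ((r - k) * (s - k)) * qb q r k * qb q s k * pp q q k / pp (x * y * q) q k" for r s k
  define c where "c k = pp q q k / pp (x * y * q) q k * q ^ (k * k)" for k
  have R1: "RR q (x * y) r s = (\<Sum>k\<le>n. f r s k)" if "r \<le> n" "s \<le> m" for r s
  proof -
    have "pp (x * y * q) q (r + s) \<noteq> 0" using pp_nz_mono[OF nz] that by simp
    then have "RR q (x * y) r s = (\<Sum>k\<le>r. f r s k)" unfolding f_def using V1div by simp
    also have "\<dots> = (\<Sum>k\<le>n. f r s k)"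
      by (rule sum.mono_neutral_left) (use that in \<open>auto simp: f_def\<close>)
    finally show ?thesis .
  qed
  have T: "M r s * f r s k = c k * (XF q n k x r * XF q m k y s)" for r s k
  proof (cases "k \<le> r \<and> k \<le> s")
    case True
    have pw: "q ^ (r\<^sup>2 + s\<^sup>2 - r * s) * q ^ ((r - k) * (s - k)) = q ^ (k * k) * q ^ (r * (r - k)) * q ^ (s * (s - k))"
      unfolding power_add[symmetric] using ex3[of k r s] True by simp
    have "M r s * f r s k = qb q n r * qb q m s * x ^ r * y ^ s * (q ^ (r\<^sup>2 + s\<^sup>2 - r * s) * q ^ ((r - k) * (s - k)))
      * pp (x * q ^ (r + 1)) q (n - r) * pp (y * q ^ (s + 1)) q (m - s) * qb q r k * qb q s k * pp q q k / pp (x * y * q) q k"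
      unfolding M_def f_def by (simp add: mult_ac)
    also have "\<dots> = c k * (XF q n k x r * XF q m k y s)"
      unfolding pw c_def XF_def by (simp add: mult_ac)
    finally show ?thesis .
  next
    case False then show ?thesis by (auto simp: f_def XF_def)
  qed
  have "(\<Sum>r\<le>n. \<Sum>s\<le>m. M r s * RR q (x * y) r s) = (\<Sum>r\<le>n. \<Sum>s\<le>m. \<Sum>k\<le>n. M r s * f r s k)"
    by (rule sum.cong[OF refl], rule sum.cong[OF refl]) (simp add: R1 sum_distrib_left)
  also have "\<dots> = (\<Sum>r\<le>n. \<Sum>k\<le>n. \<Sum>s\<le>m. M r s * f r s k)"
    by (rule sum.cong[OF refl]) (rule sum.swap)
  also have "\<dots> = (\<Sum>k\<le>n. \<Sum>r\<le>n. \<Sum>s\<le>m. M r s * f r s k)"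
    by (rule sum.swap)
  also have "\<dots> = (\<Sum>k\<le>n. c k * ((\<Sum>r\<le>n. XF q n k x r) * (\<Sum>s\<le>m. XF q m k y s)))"
    by (rule sum.cong[OF refl]) (simp only: T sum_prod_c)
  also have "\<dots> = (\<Sum>k\<le>n. qb q n k * qb q m k * pp q q k * (x * y) ^ k * q ^ (k * k) / pp (x * y * q) q k)"
    by (rule sum.cong[OF refl]) (simp add: Xsum[OF q] c_def power_mult_distrib mult_ac)
  also have "\<dots> = RR q (x * y) n m"
    using V2div[of "x * y" q n m] nz by simp
  finally show ?thesis unfolding M_def by (simp add: mult_ac)
qed


lemma qb_div: "pp q q n \<noteq> 0 \<Longrightarrow> r \<le> n \<Longrightarrow> qb q n r = pp q q n / (pp q q r * pp q q (n - r))"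
proof -
  assume a: "pp q q n \<noteq> 0" "r \<le> n"
  have "pp q q r \<noteq> 0" "pp q q (n - r) \<noteq> 0" using pp_nz_mono[OF a(1)] a(2) by auto
  then show ?thesis using qb_fact[OF a(2), of q] by (simp add: field_simps)
qed

lemma pp_shift_div: "pp (x * q) q n \<noteq> 0 \<Longrightarrow> r \<le> n \<Longrightarrow> pp (x * q ^ (r + 1)) q (n - r) = pp (x * q) q n / pp (x * q) q r"
proof -
  assume a: "pp (x * q) q n \<noteq> 0" "r \<le> n"
  have "pp (x * q) q n = pp (x * q) q r * pp (x * q ^ (r + 1)) q (n - r)"
    using pp_add[of "x * q" q r "n - r"] a(2) by (simp add: mult_ac)
  moreover have "pp (x * q) q r \<noteq> 0" using pp_nz_mono[OF a(1)] a(2) by auto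
  ultimately show ?thesis by simp
qed

lemma I1:
  assumes q: "q \<noteq> 0" and n1: "pp q q n \<noteq> 0" "pp q q m \<noteq> 0"
    and n2: "pp (x * q) q n \<noteq> 0" "pp (y * q) q m \<noteq> 0" and n3: "pp (x * y * q) q (n + m) \<noteq> 0"
  shows "(\<Sum>r\<in>{0..n}. \<Sum>s\<in>{0..m}. Kc n m r s x y q * Phi (int r) (int s) x y q) = Phi (int n) (int m) x y q"
proof -
  define C where "C = pp q q n * pp q q m * pp (x * q) q n * pp (y * q) q m"
  have C0: "C \<noteq> 0" unfolding C_def using n1 n2 by simp
  define MT where "MT r s = qb q n r * qb q m s * x ^ r * y ^ s * q ^ (r\<^sup>2 + s\<^sup>2 - r * s)
      * pp (x * q ^ (r + 1)) q (n - r) * pp (y * q ^ (s + 1)) q (m - s) * RR q (x * y) r s" for r s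
  have trm: "Kc n m r s x y q * Phi (int r) (int s) x y q = MT r s / C" if rs: "r \<le> n" "s \<le> m" for r s
  proof -
    have a1: "pp q q r \<noteq> 0" "pp q q (n - r) \<noteq> 0" using pp_nz_mono[OF n1(1)] rs by auto
    have a2: "pp q q s \<noteq> 0" "pp q q (m - s) \<noteq> 0" using pp_nz_mono[OF n1(2)] rs by auto
    have a3: "pp (x * q) q r \<noteq> 0" using pp_nz_mono[OF n2(1)] rs by auto
    have a4: "pp (y * q) q s \<noteq> 0" using pp_nz_mono[OF n2(2)] rs by auto
    have a5: "pp (x * y * q) q r \<noteq> 0" "pp (x * y * q) q s \<noteq> 0" using pp_nz_mono[OF n3] rs by auto
    have i1: "int n - int r = int (n - r)" "int m - int s = int (m - s)" using rs by auto
    have i2: "int r + int s = int (r + s)" by simp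
    have K: "Kc n m r s x y q = x ^ r * y ^ s * q ^ (r\<^sup>2 + s\<^sup>2 - r * s) / (pp q q (n - r) * pp q q (m - s))"
      unfolding Kc_def i1 qpoch_nat ..
    have P: "Phi (int r) (int s) x y q = pp (x * y * q) q (r + s) / (pp q q r * pp (x * q) q r * pp (x * y * q) q r
        * pp q q s * pp (y * q) q s * pp (x * y * q) q s)"
      unfolding Phi_def i2 qpoch_nat by simp
    show ?thesis
      unfolding K P MT_def C_def RR_def qb_div[OF n1(1) rs(1)] qb_div[OF n1(2) rs(2)]
        pp_shift_div[OF n2(1) rs(1)] pp_shift_div[OF n2(2) rs(2)]
      using a1 a2 a3 a4 a5 n1 n2 by (simp add: field_simps)
  qed
  have "(\<Sum>r\<in>{0..n}. \<Sum>s\<in>{0..m}. Kc n m r s x y q * Phi (int r) (int s) x y q)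
      = (\<Sum>r\<le>n. \<Sum>s\<le>m. MT r s / C)"
    unfolding atLeast0AtMost by (rule sum.cong[OF refl], rule sum.cong[OF refl]) (simp add: trm)
  also have "\<dots> = (\<Sum>r\<le>n. \<Sum>s\<le>m. MT r s) / C" by (simp add: sum_divide_distrib)
  also have "(\<Sum>r\<le>n. \<Sum>s\<le>m. MT r s) = RR q (x * y) n m"
    unfolding MT_def using MAIN[OF q, of x y n m] n3 by simp
  also have "RR q (x * y) n m / C = Phi (int n) (int m) x y q"
  proof -
    have i2: "int n + int m = int (n + m)" by simp
    have "pp (x * y * q) q n \<noteq> 0" "pp (x * y * q) q m \<noteq> 0" using pp_nz_mono[OF n3] by auto
    then show ?thesis unfolding Phi_def i2 qpoch_nat RR_def C_def using n1 n2 by (simp add: field_simps)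
  qed
  finally show ?thesis .
qed




lemma pp_nzI: "(\<And>i. i < j \<Longrightarrow> c * q ^ i \<noteq> 1) \<Longrightarrow> pp c q j \<noteq> 0"
  unfolding pp_def by (simp add: prod_zero_iff)

lemma Phi_nat: "Phi (int n) (int m) x y q = pp (x * y * q) q (n + m) /
   (pp q q n * pp (x * q) q n * pp (x * y * q) q n * pp q q m * pp (y * q) q m * pp (x * y * q) q m)"
proof -
  have "int n + int m = int (n + m)" by simp
  then show ?thesis unfolding Phi_def qpoch_nat by (simp only: qpoch_nat) simp
qed

lemma qpoch_2: "qpoch c q 2 = (1 - c) * (1 - c * q)"
proof -
  have "qpoch c q 2 = pp c q (Suc (Suc 0))" using qpoch_nat[of c q 2] by (simp add: numeral_2_eq_2)
  then show ?thesis by (simp add: pp_Suc)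
qed

lemma pp_sh: "1 - c \<noteq> 0 \<Longrightarrow> pp (c * q) q k = pp c q k * (1 - c * q ^ k) / (1 - c)"
  using pp_Suc[of c q k] pp_Suc'[of c q k] by (simp add: field_simps)

lemma cancel_c: "(c::complex) \<noteq> 0 \<Longrightarrow> (c * X) / (A * B * (c * U) * D * E * F) = X / (A * B * U * D * E * F)"
  by simp

lemma P_gen:
  assumes q: "q \<noteq> 0"
    and H: "\<And>k. k \<le> a + b + 3 \<Longrightarrow> q ^ (k + 1) \<noteq> 1 \<and> z * q ^ k \<noteq> 1 \<and> w * q ^ k \<noteq> 1 \<and> z * w * q ^ k \<noteq> 1"
  shows "Phi4 (int (Suc a)) (int (Suc b)) 1 1 z w q = Phi (int (Suc a)) (int (Suc b)) z w q"
proof -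
  have i1: "int (Suc a) - 1 = int a" "int (Suc b) - 1 = int b" by simp_all
  have e1: "z / q * w * q = z * w" "z / q * q = z" "z * q * (w / q) * q = z * w * q" "w / q * q = w"
      "z * (w * q) * q = z * w * q * q"
    using q by (simp_all add: field_simps)
  define Qa where "Qa = pp q q a"
  define Qb where "Qb = pp q q b"
  define Za where "Za = pp (z * q) q a"
  define Wb where "Wb = pp (w * q) q b"
  define Ua where "Ua = pp (z * w * q) q a"
  define Ub where "Ub = pp (z * w * q) q b"
  define G where "G = pp (z * w * q) q (a + b)"
  define t where "t = q ^ a"
  define s where "s = q ^ b"
  have Hq: "q ^ k \<noteq> 1" if "1 \<le> k" "k \<le> a + b + 4" for k
    using H[of "k - 1"] that by simp
  have Hz: "z * q ^ k \<noteq> 1" "w * q ^ k \<noteq> 1" "z * w * q ^ k \<noteq> 1" if "k \<le> a + b + 3" for k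
    using H[OF that] by auto
  have nQa: "Qa \<noteq> 0" unfolding Qa_def
    by (rule pp_nzI) (use Hq in \<open>simp flip: power_Suc\<close>)
  have nQb: "Qb \<noteq> 0" unfolding Qb_def
    by (rule pp_nzI) (use Hq in \<open>simp flip: power_Suc\<close>)
  have nZa: "Za \<noteq> 0" unfolding Za_def
    by (rule pp_nzI) (use Hz(1) in \<open>simp add: mult.assoc flip: power_Suc\<close>)
  have nWb: "Wb \<noteq> 0" unfolding Wb_def
    by (rule pp_nzI) (use Hz(2) in \<open>simp add: mult.assoc flip: power_Suc\<close>)
  have nUa: "Ua \<noteq> 0" unfolding Ua_def
    by (rule pp_nzI) (use Hz(3) in \<open>simp add: mult.assoc flip: power_Suc\<close>)
  have nUb: "Ub \<noteq> 0" unfolding Ub_def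
    by (rule pp_nzI) (use Hz(3) in \<open>simp add: mult.assoc flip: power_Suc\<close>)
  have nG: "G \<noteq> 0" unfolding G_def
    by (rule pp_nzI) (use Hz(3) in \<open>simp add: mult.assoc flip: power_Suc\<close>)
  have ts: "q ^ (a + b) = t * s" unfolding t_def s_def by (simp add: power_add)
  have f1: "pp q q (Suc a) = Qa * (1 - q * t)" unfolding Qa_def t_def pp_Suc by simp
  have f2: "pp z q (Suc a) = (1 - z) * Za" unfolding Za_def pp_Suc' ..
  have f3: "pp (z * w) q (Suc a) = (1 - z * w) * Ua" unfolding Ua_def pp_Suc' ..
  have f4: "pp q q (Suc b) = Qb * (1 - q * s)" unfolding Qb_def s_def pp_Suc by simp
  have f5: "pp (w * q) q (Suc b) = Wb * (1 - w * q * s)" unfolding Wb_def s_def pp_Suc by simp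
  have f6: "pp (z * w) q (Suc b) = (1 - z * w) * Ub" unfolding Ub_def pp_Suc' ..
  have f7: "pp (z * w) q (Suc a + Suc b) = (1 - z * w) * (G * (1 - z * w * q * (t * s)))"
  proof -
    have ee: "Suc a + Suc b = Suc (Suc (a + b))" by simp
    show ?thesis unfolding G_def ee pp_Suc'[of "z * w" q "Suc (a + b)"] pp_Suc[of "z*w*q" q "a + b"] ts
      by (simp add: mult_ac)
  qed
  have f8: "pp (z * w * q) q (a + Suc b) = G * (1 - z * w * q * (t * s))"
    unfolding G_def add_Suc_right pp_Suc ts ..
  have f9: "pp (z * q * q) q a = Za * (1 - z * q * t) / (1 - z * q)"
    unfolding Za_def t_def by (rule pp_sh) (use Hz(1)[of 1] in simp)
  have f10: "pp w q (Suc b) = (1 - w) * Wb" unfolding Wb_def pp_Suc' ..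
  have f11: "pp (z * w * q) q (Suc b) = Ub * (1 - z * w * q * s)" unfolding Ub_def s_def pp_Suc ..
  have f12: "pp (z * w * q * q) q (a + b) = G * (1 - z * w * q * (t * s)) / (1 - z * w * q)"
    unfolding G_def ts[symmetric] by (rule pp_sh) (use Hz(3)[of 1] in simp)
  have f13: "pp (z * w * q * q) q a = Ua * (1 - z * w * q * t) / (1 - z * w * q)"
    unfolding Ua_def t_def by (rule pp_sh) (use Hz(3)[of 1] in simp)
  have f14: "pp (z * w * q * q) q b = Ub * (1 - z * w * q * s) / (1 - z * w * q)"
    unfolding Ub_def s_def by (rule pp_sh) (use Hz(3)[of 1] in simp)
  have f15: "pp (w * q * q) q b = Wb * (1 - w * q * s) / (1 - w * q)"
    unfolding Wb_def s_def by (rule pp_sh) (use Hz(2)[of 1] in simp)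
  have f16: "pp (z * w * q) q (Suc a + Suc b) = G * (1 - z * w * q * (t * s)) * (1 - z * w * q * (q * (t * s)))"
  proof -
    have ee: "Suc a + Suc b = Suc (Suc (a + b))" by simp
    show ?thesis unfolding G_def ee pp_Suc[of "z*w*q" q "Suc (a + b)"] pp_Suc[of "z*w*q" q "a + b"] power_Suc ts
      by (simp add: mult_ac)
  qed
  have f17: "pp (z * q) q (Suc a) = Za * (1 - z * q * t)" unfolding Za_def t_def pp_Suc ..
  have f18: "pp (z * w * q) q (Suc a) = Ua * (1 - z * w * q * t)" unfolding Ua_def t_def pp_Suc ..
  have g: "pp (z * q) q a = Za" "pp (z * w * q) q a = Ua" "pp q q a = Qa" "pp q q b = Qb"
    unfolding Za_def Ua_def Qa_def Qb_def by simp_all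
  have d: "1 - q * t \<noteq> 0" "1 - q * s \<noteq> 0" "1 - z \<noteq> 0" "1 - z * w \<noteq> 0" "1 - w * q * s \<noteq> 0"
    "1 - z * q \<noteq> 0" "1 - z * q * t \<noteq> 0" "1 - w \<noteq> 0" "1 - w * q \<noteq> 0" "1 - z * w * q \<noteq> 0"
    "1 - z * w * q * (t * s) \<noteq> 0" "1 - z * w * q * s \<noteq> 0" "1 - z * w * q * t \<noteq> 0"
    "1 - z * w * q * (q * (t * s)) \<noteq> 0"
    using Hq[of "Suc a"] Hq[of "Suc b"] Hz(1)[of 0] Hz(3)[of 0] Hz(2)[of "Suc b"] Hz(1)[of 1] Hz(1)[of "Suc a"]
      Hz(2)[of 0] Hz(2)[of 1] Hz(3)[of 1] Hz(3)[of "Suc (a + b)"] Hz(3)[of "Suc b"] Hz(3)[of "Suc a"]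
      Hz(3)[of "Suc (Suc (a + b))"]
    unfolding t_def s_def by (auto simp: power_add mult_ac)
  define F where "F = G * (1 - z * w * q * (t * s)) / (Qa * Za * Ua * Qb * Wb * Ub)"
  define A1 where "A1 = 1 / ((1 - q * t) * (1 - z) * (1 - q * s) * (1 - w * q * s) * (1 - z * w))"
  define A2 where "A2 = z / ((1 - z) * (1 - z * q * t) * (1 - q * s) * (1 - w) * (1 - z * w * q * s))"
  define A3 where "A3 = z * w * w / ((1 - w) * (1 - z * w) * (1 - z * w * q * t) * (1 - w * q * s) * (1 - z * w * q * s))"
  define A0 where "A0 = (1 - z * w * q * (q * (t * s))) / ((1 - q * t) * (1 - z * q * t) * (1 - z * w * q * t) * (1 - q * s) * (1 - w * q * s) * (1 - z * w * q * s))"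
  have h1: "Phi (int (Suc a)) (int (Suc b)) (z / q) w q = F * A1"
    unfolding Phi_nat e1 f1 f2 f3 f4 f5 f6 f7 F_def A1_def cancel_c[OF d(4)]
    using d nQa nQb nZa nWb nUa nUb nG by (simp add: field_simps)
  have h2: "z / qpoch z q 2 * Phi (int a) (int (Suc b)) (z * q) (w / q) q = F * A2"
  proof -
    define L1 where "L1 = 1 - z"
    define L2 where "L2 = 1 - z * q"
    define L3 where "L3 = 1 - z * q * t"
    define L4 where "L4 = 1 - q * s"
    define L5 where "L5 = 1 - w"
    define L6 where "L6 = 1 - z * w * q * s"
    define L7 where "L7 = 1 - z * w * q * (t * s)"
    have nL: "L1 \<noteq> 0" "L2 \<noteq> 0" "L3 \<noteq> 0" "L4 \<noteq> 0" "L5 \<noteq> 0" "L6 \<noteq> 0" "L7 \<noteq> 0"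
      unfolding L1_def L2_def L3_def L4_def L5_def L6_def L7_def using d by auto
    show ?thesis
      unfolding Phi_nat e1 qpoch_2 f4 f8 f9 f10 f11 g F_def A2_def
      unfolding L1_def[symmetric] L2_def[symmetric] L3_def[symmetric] L4_def[symmetric]
        L5_def[symmetric] L6_def[symmetric] L7_def[symmetric]
      using nL nQa nQb nZa nWb nUa nUb nG by (simp add: field_simps)
  qed
  have h3: "z * w\<^sup>2 / (qpoch w q 2 * qpoch (z * w) q 2) * Phi (int a) (int b) z (w * q) q = F * A3"
  proof -
    define L1 where "L1 = 1 - w"
    define L2 where "L2 = 1 - w * q"
    define L3 where "L3 = 1 - z * w"
    define L4 where "L4 = 1 - z * w * q"
    define L5 where "L5 = 1 - z * w * q * t"
    define L6 where "L6 = 1 - z * w * q * s"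
    define L7 where "L7 = 1 - z * w * q * (t * s)"
    define L8 where "L8 = 1 - w * q * s"
    have nL: "L1 \<noteq> 0" "L2 \<noteq> 0" "L3 \<noteq> 0" "L4 \<noteq> 0" "L5 \<noteq> 0" "L6 \<noteq> 0" "L7 \<noteq> 0" "L8 \<noteq> 0"
      unfolding L1_def L2_def L3_def L4_def L5_def L6_def L7_def L8_def using d by auto
    have ww: "(z * w) * q = z * w * q" by simp
    show ?thesis
      unfolding Phi_nat e1 qpoch_2 f12 f13 f14 f15 g F_def A3_def
      unfolding L1_def[symmetric] L2_def[symmetric] L3_def[symmetric] L4_def[symmetric]
        L5_def[symmetric] L6_def[symmetric] L7_def[symmetric] L8_def[symmetric]
      using nL nQa nQb nZa nWb nUa nUb nG by (simp add: field_simps power2_eq_square)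
  qed
  have h0: "Phi (int (Suc a)) (int (Suc b)) z w q = F * A0"
    unfolding Phi_nat f1 f4 f5 f11 f16 f17 f18 F_def A0_def
    using d nQa nQb nZa nWb nUa nUb nG by (simp add: field_simps)
  have hA: "A1 - A2 + A3 = A0"
  proof -
    define a1 where "a1 = 1 - q * t"
    define a2 where "a2 = 1 - z"
    define a3 where "a3 = 1 - q * s"
    define a4 where "a4 = 1 - w * q * s"
    define a5 where "a5 = 1 - z * w"
    define a6 where "a6 = 1 - z * q * t"
    define a7 where "a7 = 1 - w"
    define a8 where "a8 = 1 - z * w * q * s"
    define a9 where "a9 = 1 - z * w * q * t"
    define D where "D = a1 * a2 * a3 * a4 * a5 * a6 * a7 * a8 * a9"
    have nz: "a1 \<noteq> 0" "a2 \<noteq> 0" "a3 \<noteq> 0" "a4 \<noteq> 0" "a5 \<noteq> 0" "a6 \<noteq> 0" "a7 \<noteq> 0" "a8 \<noteq> 0" "a9 \<noteq> 0"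
      unfolding a1_def a2_def a3_def a4_def a5_def a6_def a7_def a8_def a9_def using d by auto
    have P: "a6 * a7 * a8 * a9 - z * a1 * a4 * a5 * a9 + z * w * w * a1 * a2 * a3 * a6
        = (1 - z * w * q * (q * (t * s))) * a2 * a5 * a7"
      unfolding a1_def a2_def a3_def a4_def a5_def a6_def a7_def a8_def a9_def
      by (simp add: algebra_simps)
    have r1: "A1 = a6 * a7 * a8 * a9 / D"
      unfolding A1_def D_def a1_def[symmetric] a2_def[symmetric] a3_def[symmetric] a4_def[symmetric] a5_def[symmetric]
      using nz by (simp add: field_simps)
    have r2: "A2 = z * a1 * a4 * a5 * a9 / D"
      unfolding A2_def D_def a2_def[symmetric] a6_def[symmetric] a3_def[symmetric] a7_def[symmetric] a8_def[symmetric]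
      using nz by (simp add: field_simps)
    have r3: "A3 = z * w * w * a1 * a2 * a3 * a6 / D"
      unfolding A3_def D_def a7_def[symmetric] a5_def[symmetric] a9_def[symmetric] a4_def[symmetric] a8_def[symmetric]
      using nz by (simp add: field_simps)
    have r0: "A0 = (1 - z * w * q * (q * (t * s))) * a2 * a5 * a7 / D"
      unfolding A0_def D_def a1_def[symmetric] a6_def[symmetric] a9_def[symmetric] a3_def[symmetric] a4_def[symmetric] a8_def[symmetric]
      using nz by (simp add: field_simps)
    show ?thesis unfolding r1 r2 r3 r0 P[symmetric] by (simp add: diff_divide_distrib add_divide_distrib)
  qed
  have "Phi4 (int (Suc a)) (int (Suc b)) 1 1 z w q = F * (A1 - A2 + A3)"
    unfolding Phi4_def i1 using h1 h2 h3 by (simp add: algebra_simps)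
  then show ?thesis unfolding hA h0 .
qed


lemma P_n0:
  assumes q: "q \<noteq> 0"
    and H: "\<And>k. k \<le> m + 1 \<Longrightarrow> q ^ (k + 1) \<noteq> 1 \<and> z * q ^ k \<noteq> 1 \<and> w * q ^ k \<noteq> 1 \<and> z * w * q ^ k \<noteq> 1"
  shows "Phi4 (int 0) (int m) 1 1 z w q = Phi (int 0) (int m) z w q"
proof -
  have e1: "z / q * w * q = z * w" "z / q * q = z" using q by (simp_all add: field_simps)
  have n1: "pp (z * w) q m \<noteq> 0"
    by (rule pp_nzI) (use H in auto)
  have n2: "pp (z * w * q) q m \<noteq> 0"
    by (rule pp_nzI) (use H in \<open>auto simp add: mult.assoc simp flip: power_Suc\<close>)
  have z0: "Phi (int 0 - 1) b c d q = 0" for b c d by (simp add: Phi_def)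
  show ?thesis unfolding Phi4_def z0 Phi_nat e1 using n1 n2 by simp
qed

lemma P_m0:
  assumes q: "q \<noteq> 0"
    and H: "\<And>k. k \<le> a + 2 \<Longrightarrow> q ^ (k + 1) \<noteq> 1 \<and> z * q ^ k \<noteq> 1 \<and> w * q ^ k \<noteq> 1 \<and> z * w * q ^ k \<noteq> 1"
  shows "Phi4 (int (Suc a)) (int 0) 1 1 z w q = Phi (int (Suc a)) (int 0) z w q"
proof -
  have i1: "int (Suc a) - 1 = int a" by simp
  have z0: "Phi b (int 0 - 1) c d q = 0" for b c d by (simp add: Phi_def)
  have e1: "z / q * w * q = z * w" "z / q * q = z" "z * q * (w / q) * q = z * w * q" "w / q * q = w"
    using q by (simp_all add: field_simps)
  have Hq: "q ^ k \<noteq> 1" if "1 \<le> k" "k \<le> a + 3" for k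
    using H[of "k - 1"] that by simp
  have Hz: "z * q ^ k \<noteq> 1" "w * q ^ k \<noteq> 1" "z * w * q ^ k \<noteq> 1" if "k \<le> a + 2" for k
    using H[OF that] by auto
  define Qa where "Qa = pp q q a"
  define Za where "Za = pp (z * q) q a"
  define t where "t = q ^ a"
  have nQa: "Qa \<noteq> 0" unfolding Qa_def
    by (rule pp_nzI) (use Hq in \<open>simp flip: power_Suc\<close>)
  have nZa: "Za \<noteq> 0" unfolding Za_def
    by (rule pp_nzI) (use Hz(1) in \<open>simp add: mult.assoc flip: power_Suc\<close>)
  have nU1: "pp (z * w) q (Suc a) \<noteq> 0"
    by (rule pp_nzI) (use Hz(3) in auto)
  have nU2: "pp (z * w * q) q a \<noteq> 0"
    by (rule pp_nzI) (use Hz(3) in \<open>simp add: mult.assoc flip: power_Suc\<close>)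
  have f1: "pp q q (Suc a) = Qa * (1 - q * t)" unfolding Qa_def t_def pp_Suc by simp
  have f2: "pp z q (Suc a) = (1 - z) * Za" unfolding Za_def pp_Suc' ..
  have f9: "pp (z * q * q) q a = Za * (1 - z * q * t) / (1 - z * q)"
    unfolding Za_def t_def by (rule pp_sh) (use Hz(1)[of 1] in simp)
  have g: "pp q q a = Qa" unfolding Qa_def ..
  have d: "1 - q * t \<noteq> 0" "1 - z \<noteq> 0" "1 - z * q \<noteq> 0" "1 - z * q * t \<noteq> 0"
    using Hq[of "Suc a"] Hz(1)[of 0] Hz(1)[of 1] Hz(1)[of "Suc a"] unfolding t_def by (auto simp: mult_ac)
  have f17: "pp (z * q) q (Suc a) = Za * (1 - z * q * t)" unfolding Za_def t_def pp_Suc ..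
  define L1 where "L1 = 1 - q * t"
  define L2 where "L2 = 1 - z"
  define L3 where "L3 = 1 - z * q"
  define L4 where "L4 = 1 - z * q * t"
  have nL: "L1 \<noteq> 0" "L2 \<noteq> 0" "L3 \<noteq> 0" "L4 \<noteq> 0" unfolding L1_def L2_def L3_def L4_def using d by auto
  have hA: "1 / (L1 * L2) - z / (L2 * L3) * (L3 / L4) = 1 / (L1 * L4)"
  proof -
    have rel: "L4 - z * L1 = L2" unfolding L1_def L2_def L4_def by (simp add: algebra_simps)
    have "1 / (L1 * L2) - z / (L2 * L3) * (L3 / L4) = (L4 - z * L1) / (L1 * L2 * L4)"
      using nL by (simp add: field_simps)
    also have "\<dots> = 1 / (L1 * L4)" unfolding rel using nL by simp
    finally show ?thesis .
  qed
  have lhs: "Phi4 (int (Suc a)) (int 0) 1 1 z w q = 1 / (Qa * Za) * (1 / (L1 * L2) - z / (L2 * L3) * (L3 / L4))"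
    unfolding Phi4_def i1 z0 Phi_nat e1 qpoch_2 f1 f2 f9 g
    unfolding L1_def[symmetric] L2_def[symmetric] L3_def[symmetric] L4_def[symmetric]
    using nL nQa nZa nU1 nU2 by (simp add: field_simps)
  have rhs: "Phi (int (Suc a)) (int 0) z w q = 1 / (Qa * Za) * (1 / (L1 * L4))"
  proof -
    have "pp (z * w * q) q (Suc a) \<noteq> 0" by (rule pp_nzI) (use Hz(3) in \<open>simp add: mult.assoc flip: power_Suc\<close>)
    then show ?thesis unfolding Phi_nat f1 f17 unfolding L1_def[symmetric] L4_def[symmetric]
      using nL nQa nZa by (simp add: field_simps)
  qed
  show ?thesis unfolding lhs rhs hA ..
qed

lemma P_all:
  assumes q: "q \<noteq> 0"
    and H: "\<And>k. k \<le> n + m + 1 \<Longrightarrow> q ^ (k + 1) \<noteq> 1 \<and> z * q ^ k \<noteq> 1 \<and> w * q ^ k \<noteq> 1 \<and> z * w * q ^ k \<noteq> 1"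
  shows "Phi4 (int n) (int m) 1 1 z w q = Phi (int n) (int m) z w q"
proof (cases n)
  case 0 then show ?thesis using P_n0[OF q, of m z w] H by simp
next
  case (Suc a)
  show ?thesis
  proof (cases m)
    case 0 then show ?thesis using P_m0[OF q, of a z w] H Suc by simp
  next
    case (Suc b) then show ?thesis using P_gen[OF q, of a b z w] H \<open>n = Suc a\<close> by simp
  qed
qed



lemma Hpp:
  assumes H: "\<And>k. k \<le> N \<Longrightarrow> q ^ (k + 1) \<noteq> 1 \<and> z * q ^ k \<noteq> 1 \<and> w * q ^ k \<noteq> 1 \<and> z * w * q ^ k \<noteq> 1"
  shows "j \<le> N + 1 \<Longrightarrow> pp q q j \<noteq> 0"
    and "e + j \<le> N + 1 \<Longrightarrow> pp (z * q ^ e) q j \<noteq> 0"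
    and "e + j \<le> N + 1 \<Longrightarrow> pp (w * q ^ e) q j \<noteq> 0"
    and "e + j \<le> N + 1 \<Longrightarrow> pp (z * w * q ^ e) q j \<noteq> 0"
proof -
  assume a: "j \<le> N + 1"
  show "pp q q j \<noteq> 0"
  proof (rule pp_nzI)
    fix i assume "i < j" then show "q * q ^ i \<noteq> 1" using H[of i] a by (simp add: mult.commute)
  qed
next
  assume a: "e + j \<le> N + 1"
  show "pp (z * q ^ e) q j \<noteq> 0"
  proof (rule pp_nzI)
    fix i assume "i < j" then show "z * q ^ e * q ^ i \<noteq> 1" using H[of "e + i"] a by (simp add: power_add mult.assoc)
  qed
  show "pp (w * q ^ e) q j \<noteq> 0"
  proof (rule pp_nzI)
    fix i assume "i < j" then show "w * q ^ e * q ^ i \<noteq> 1" using H[of "e + i"] a by (simp add: power_add mult.assoc)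
  qed
  show "pp (z * w * q ^ e) q j \<noteq> 0"
  proof (rule pp_nzI)
    fix i assume "i < j" then show "z * w * q ^ e * q ^ i \<noteq> 1" using H[of "e + i"] a by (simp add: power_add mult.assoc)
  qed
qed

lemma exA: "(Suc r)\<^sup>2 + s\<^sup>2 - Suc r * s + s = r\<^sup>2 + s\<^sup>2 - r * s + r + Suc r"
proof -
  have le0: "r * s \<le> r\<^sup>2 + s\<^sup>2" by (rule rs_le)
  have le1: "Suc r * s \<le> (Suc r)\<^sup>2 + s\<^sup>2" by (rule rs_le)
  have "int ((Suc r)\<^sup>2 + s\<^sup>2 - Suc r * s + s) = int (r\<^sup>2 + s\<^sup>2 - r * s + r + Suc r)"
    using le0 le1 by (simp add: of_nat_diff power2_eq_square algebra_simps)
  then show ?thesis by (simp only: of_nat_eq_iff)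
qed

lemma exB: "(Suc r)\<^sup>2 + (Suc s)\<^sup>2 - Suc r * Suc s = r\<^sup>2 + s\<^sup>2 - r * s + Suc r + s"
proof -
  have le0: "r * s \<le> r\<^sup>2 + s\<^sup>2" by (rule rs_le)
  have le1: "Suc r * Suc s \<le> (Suc r)\<^sup>2 + (Suc s)\<^sup>2" by (rule rs_le)
  have "int ((Suc r)\<^sup>2 + (Suc s)\<^sup>2 - Suc r * Suc s) = int (r\<^sup>2 + s\<^sup>2 - r * s + Suc r + s)"
    using le0 le1 by (simp add: of_nat_diff power2_eq_square algebra_simps)
  then show ?thesis by (simp only: of_nat_eq_iff)
qed

lemma Kc_shift1:
  assumes q: "q \<noteq> 0"
  shows "Kc (Suc n) m (Suc r) s (z / q) w q = z * Kc n m r s (z * q) (w / q) q"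
proof -
  have i: "int (Suc n) - int (Suc r) = int n - int r" by simp
  define e1 where "e1 = (Suc r)\<^sup>2 + s\<^sup>2 - Suc r * s"
  define e0 where "e0 = r\<^sup>2 + s\<^sup>2 - r * s"
  have pw: "q ^ e1 * q ^ s = q ^ e0 * q ^ r * q ^ Suc r"
    unfolding power_add[symmetric] e1_def e0_def exA ..
  have "(z / q) ^ Suc r * w ^ s * q ^ e1 = z * ((z * q) ^ r * (w / q) ^ s * q ^ e0)"
  proof -
    have qs: "q ^ s \<noteq> 0" using q by simp
    have pw': "q ^ e1 = q ^ e0 * q ^ r * q ^ Suc r / q ^ s"
      using pw qs by (simp add: eq_divide_eq)
    show ?thesis unfolding pw' using q by (simp add: power_divide power_mult_distrib field_simps)
  qed
  then show ?thesis unfolding Kc_def i e1_def[symmetric] e0_def[symmetric] by simp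
qed

lemma Kc_shift2:
  assumes q: "q \<noteq> 0"
  shows "Kc (Suc n) (Suc m) (Suc r) (Suc s) (z / q) w q = z * w * Kc n m r s z (w * q) q"
proof -
  have i: "int (Suc n) - int (Suc r) = int n - int r" "int (Suc m) - int (Suc s) = int m - int s" by simp_all
  define e1 where "e1 = (Suc r)\<^sup>2 + (Suc s)\<^sup>2 - Suc r * Suc s"
  define e0 where "e0 = r\<^sup>2 + s\<^sup>2 - r * s"
  have pw: "q ^ e1 = q ^ e0 * q ^ Suc r * q ^ s"
    unfolding power_add[symmetric] e1_def e0_def exB ..
  have "(z / q) ^ Suc r * w ^ Suc s * q ^ e1 = z * w * (z ^ r * (w * q) ^ s * q ^ e0)"
    unfolding pw using q by (simp add: power_divide power_mult_distrib field_simps)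
  then show ?thesis unfolding Kc_def i e1_def[symmetric] e0_def[symmetric] by simp
qed


lemma I1':
  assumes "q \<noteq> 0" "pp q q n \<noteq> 0" "pp q q m \<noteq> 0" "pp (x * q) q n \<noteq> 0" "pp (y * q) q m \<noteq> 0"
    "pp (x * y * q) q (n + m) \<noteq> 0"
  shows "(\<Sum>r\<le>n. \<Sum>s\<le>m. Kc n m r s x y q * Phi (int r) (int s) x y q) = Phi (int n) (int m) x y q"
  using I1[OF assms] by (simp add: atLeast0AtMost)

theorem theorem4p4:
  fixes n m :: nat and u v z w q :: complex
  assumes "q \<noteq> 0"
    and "\<And>k::nat. k \<le> n + m + 1 \<Longrightarrow>
           q ^ (k + 1) \<noteq> 1 \<and> z * q ^ k \<noteq> 1 \<and> w * q ^ k \<noteq> 1 \<and> z * w * q ^ k \<noteq> 1"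
  shows "((\<Sum>r\<in>{0..n}. \<Sum>s\<in>{0..m}. Kc n m r s z w q * Phi4 (int r) (int s) 1 1 z w q)
           = Phi4 (int n) (int m) 1 1 z w q)
       \<and> ((\<Sum>r\<in>{0..n}. \<Sum>s\<in>{0..m}. Kc n m r s (z / q) w q * Phi4 (int r) (int s) u v z w q)
           = Phi4 (int n) (int m) (u * z) (v * w) z w q)"
proof -
  note q = assms(1)
  note H = assms(2)
  note HP = Hpp[of "n + m + 1" q z w, OF H]
  have P1: "(\<Sum>r\<le>n. \<Sum>s\<le>m. Kc n m r s z w q * Phi4 (int r) (int s) 1 1 z w q) = Phi4 (int n) (int m) 1 1 z w q"
  proof -
    have "(\<Sum>r\<le>n. \<Sum>s\<le>m. Kc n m r s z w q * Phi4 (int r) (int s) 1 1 z w q)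
        = (\<Sum>r\<le>n. \<Sum>s\<le>m. Kc n m r s z w q * Phi (int r) (int s) z w q)"
    proof (rule sum.cong[OF refl], rule sum.cong[OF refl])
      fix r s assume "r \<in> {..n}" "s \<in> {..m}"
      then have "Phi4 (int r) (int s) 1 1 z w q = Phi (int r) (int s) z w q"
        using P_all[OF q, of r s z w] H by simp
      then show "Kc n m r s z w q * Phi4 (int r) (int s) 1 1 z w q = Kc n m r s z w q * Phi (int r) (int s) z w q" by simp
    qed
    also have "\<dots> = Phi (int n) (int m) z w q"
      by (rule I1'[OF q]) (use HP(1)[of n] HP(1)[of m] HP(2)[of 1 n] HP(3)[of 1 m] HP(4)[of 1 "n + m"] in simp_all)
    also have "\<dots> = Phi4 (int n) (int m) 1 1 z w q"
      using P_all[OF q, of n m z w] H by simp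
    finally show ?thesis .
  qed
  define K' where "K' r s = Kc n m r s (z / q) w q" for r s
  define A where "A r s = Phi (int r) (int s) (z / q) w q" for r s
  define B where "B r s = z / qpoch z q 2 * Phi (int r - 1) (int s) (z * q) (w / q) q" for r s
  define C where "C r s = z * w\<^sup>2 / (qpoch w q 2 * qpoch (z * w) q 2) * Phi (int r - 1) (int s - 1) z (w * q) q" for r s
  have dec: "Phi4 (int r) (int s) u v z w q = A r s - u * B r s + u * v * C r s" for r s
    unfolding Phi4_def A_def B_def C_def by (simp add: algebra_simps)
  have decN: "Phi4 (int n) (int m) (u * z) (v * w) z w q = A n m - u * (z * B n m) + u * v * (z * w * C n m)"
    unfolding Phi4_def A_def B_def C_def by (simp add: algebra_simps)
  have SA: "(\<Sum>r\<le>n. \<Sum>s\<le>m. K' r s * A r s) = A n m"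
    unfolding K'_def A_def
    by (rule I1'[OF q]) (use q HP(1)[of n] HP(1)[of m] HP(2)[of 0 n] HP(3)[of 1 m] HP(4)[of 0 "n + m"] in simp_all)
  have SB: "(\<Sum>r\<le>n. \<Sum>s\<le>m. K' r s * B r s) = z * B n m"
  proof (cases n)
    case 0 then show ?thesis by (simp add: B_def Phi_def)
  next
    case (Suc n')
    define c where "c = z / qpoch z q 2"
    have "(\<Sum>r\<le>n. \<Sum>s\<le>m. K' r s * B r s) = (\<Sum>s\<le>m. K' 0 s * B 0 s) + (\<Sum>r\<le>n'. \<Sum>s\<le>m. K' (Suc r) s * B (Suc r) s)"
      unfolding Suc by (subst sum.atMost_Suc_shift) simp
    also have "(\<Sum>s\<le>m. K' 0 s * B 0 s) = 0" by (simp add: B_def Phi_def)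
    also have "(\<Sum>r\<le>n'. \<Sum>s\<le>m. K' (Suc r) s * B (Suc r) s)
        = (\<Sum>r\<le>n'. \<Sum>s\<le>m. (z * c) * (Kc n' m r s (z * q) (w / q) q * Phi (int r) (int s) (z * q) (w / q) q))"
      by (rule sum.cong[OF refl], rule sum.cong[OF refl])
        (simp add: K'_def B_def c_def Suc Kc_shift1[OF q] mult_ac)
    also have "\<dots> = (z * c) * (\<Sum>r\<le>n'. \<Sum>s\<le>m. Kc n' m r s (z * q) (w / q) q * Phi (int r) (int s) (z * q) (w / q) q)"
      by (simp add: sum_distrib_left)
    also have "(\<Sum>r\<le>n'. \<Sum>s\<le>m. Kc n' m r s (z * q) (w / q) q * Phi (int r) (int s) (z * q) (w / q) q)
        = Phi (int n') (int m) (z * q) (w / q) q"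
    proof (rule I1'[OF q])
      show "pp q q n' \<noteq> 0" using HP(1)[of n'] Suc by simp
      show "pp q q m \<noteq> 0" using HP(1)[of m] by simp
      show "pp (z * q * q) q n' \<noteq> 0" using HP(2)[of 2 n'] Suc by (simp add: power2_eq_square mult.assoc)
      show "pp (w / q * q) q m \<noteq> 0" using HP(3)[of 0 m] q by simp
      show "pp (z * q * (w / q) * q) q (n' + m) \<noteq> 0" using HP(4)[of 1 "n' + m"] Suc q by simp
    qed
    finally show ?thesis unfolding B_def c_def Suc by simp
  qed
  have SC: "(\<Sum>r\<le>n. \<Sum>s\<le>m. K' r s * C r s) = z * w * C n m"
  proof (cases "n = 0 \<or> m = 0")
    case True
    then have "C r s = 0" if "r \<le> n" "s \<le> m" for r s using that by (auto simp: C_def Phi_def)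
    then show ?thesis using True by (auto simp: C_def Phi_def)
  next
    case False
    then obtain n' m' where nm: "n = Suc n'" "m = Suc m'" by (metis not0_implies_Suc)
    define c where "c = z * w\<^sup>2 / (qpoch w q 2 * qpoch (z * w) q 2)"
    have Cz: "C r 0 = 0" "C 0 s = 0" for r s by (simp_all add: C_def Phi_def)
    have "(\<Sum>r\<le>n. \<Sum>s\<le>m. K' r s * C r s) = (\<Sum>r\<le>n'. \<Sum>s\<le>m'. K' (Suc r) (Suc s) * C (Suc r) (Suc s))"
      unfolding nm by (simp add: sum.atMost_Suc_shift Cz del: sum.atMost_Suc)
    also have "\<dots> = (\<Sum>r\<le>n'. \<Sum>s\<le>m'. (z * w * c) * (Kc n' m' r s z (w * q) q * Phi (int r) (int s) z (w * q) q))"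
      by (rule sum.cong[OF refl], rule sum.cong[OF refl])
        (simp add: K'_def C_def c_def nm Kc_shift2[OF q] mult_ac)
    also have "\<dots> = (z * w * c) * (\<Sum>r\<le>n'. \<Sum>s\<le>m'. Kc n' m' r s z (w * q) q * Phi (int r) (int s) z (w * q) q)"
      by (simp add: sum_distrib_left)
    also have "(\<Sum>r\<le>n'. \<Sum>s\<le>m'. Kc n' m' r s z (w * q) q * Phi (int r) (int s) z (w * q) q)
        = Phi (int n') (int m') z (w * q) q"
    proof (rule I1'[OF q])
      show "pp q q n' \<noteq> 0" using HP(1)[of n'] nm by simp
      show "pp q q m' \<noteq> 0" using HP(1)[of m'] nm by simp
      show "pp (z * q) q n' \<noteq> 0" using HP(2)[of 1 n'] nm by simp
      show "pp (w * q * q) q m' \<noteq> 0" using HP(3)[of 2 m'] nm by (simp add: power2_eq_square mult.assoc)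
      show "pp (z * (w * q) * q) q (n' + m') \<noteq> 0" using HP(4)[of 2 "n' + m'"] nm
        by (simp add: power2_eq_square mult.assoc)
    qed
    finally show ?thesis unfolding C_def c_def nm by simp
  qed
  have P2: "(\<Sum>r\<le>n. \<Sum>s\<le>m. K' r s * Phi4 (int r) (int s) u v z w q) = Phi4 (int n) (int m) (u * z) (v * w) z w q"
  proof -
    have "(\<Sum>r\<le>n. \<Sum>s\<le>m. K' r s * Phi4 (int r) (int s) u v z w q)
        = (\<Sum>r\<le>n. \<Sum>s\<le>m. K' r s * A r s - u * (K' r s * B r s) + u * v * (K' r s * C r s))"
      unfolding dec by (simp add: algebra_simps)
    also have "\<dots> = (\<Sum>r\<le>n. \<Sum>s\<le>m. K' r s * A r s) - u * (\<Sum>r\<le>n. \<Sum>s\<le>m. K' r s * B r s)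
        + u * v * (\<Sum>r\<le>n. \<Sum>s\<le>m. K' r s * C r s)"
      by (simp add: sum.distrib sum_subtractf sum_distrib_left)
    also have "\<dots> = Phi4 (int n) (int m) (u * z) (v * w) z w q"
      unfolding SA SB SC decN ..
    finally show ?thesis .
  qed
  show ?thesis using P1 P2 unfolding K'_def by (simp add: atLeast0AtMost)
qed


end
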